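(* Let $\Pi=(\mathsf A,\mathsf B)$ be a protocol and let $M^{\mathsf A}_\Pi$ be its $\mathsf A$-dominated measure. Then $\mathrm{Best}_{\mathsf B}(\Pi)=1-\mathbb E_{\ell\leftarrow L_\Pi}[M^{\mathsf A}_\Pi(\ell)]$.
   Context: An $m$-round single-bit-message protocol $\Pi$ is identified with the complete binary tree of height $m$ (nodes: binary strings of length $\le m$, root $\lambda$), with a control scheme, edge probabilities $e_\Pi(u,ub)$, common output $\chi_\Pi:\text{leaves}\to\{0,1\}$, node-visit probabilities $v_\Pi(u)$ and leaf distribution $L_\Pi$. For $b\in\{0,1\}$, $\Pi_b$ is the subprotocol on the subtree rooted at $b$ (the protocol conditioned on the first bit being $b$); its leaves are identified with leaves of $\Pi$ starting with $b$. Expectations over $L_\perp$ (undefined protocol) are $0$. The $\mathsf A$-dominated measure $M^{\mathsf A}_\Pi:\text{leaves}\to[0,1]$: if $\Pi$ has $0$ rounds with single leaf $\ell$, $M^{\mathsf A}_\Pi(\ell)=\chi_\Pi(\ell)$; otherwise, for a leaf $\ell$ with first bit $b=\ell_1$, writing $\mu_c=\mathbb E_{L_{\Pi_c}}[M^{\mathsf A}_{\Pi_c}]$: $M^{\mathsf A}_\Pi(\ell)=0$ if $e_\Pi(\lambda,b)=0$; $=M^{\mathsf A}_{\Pi_b}(\ell)$ if $e_\Pi(\lambda,b)=1$; $=M^{\mathsf A}_{\Pi_b}(\ell)$ if $e_\Pi(\lambda,b)\in(0,1)$ and ($\mathsf A$ controls the root or $\mu_b\le\mu_{1-b}$); and $=\frac{\mu_{1-b}}{\mu_b}M^{\mathsf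 A}_{\Pi_b}(\ell)$ otherwise. A deterministic strategy $\mathsf B'$ for $\mathsf B$ is valid if $v_\Pi(u)=0\Rightarrow v_{(\mathsf A,\mathsf B')}(u)=0$ for all $u$; $\mathrm{Best}_{\mathsf B}(\Pi)=\max_{\text{valid }\mathsf B'}(1-\mathrm{val}(\mathsf A,\mathsf B'))$, where $\mathrm{val}$ is the expected common output. *)

theory Defs
  imports Main Complex_Main
begin

text \<open>An m-round single-bit-message protocol: nodes are bool lists of length at most m,
  the root is the empty list, the child of u along bit b is u @ [b].
  ctrl u = True means that party A controls node u (False: B controls it).
  e u b is the edge probability from u to u @ [b]; chi is the common output on leaves.\<close>

definition leaves :: "nat \<Rightarrow> bool list set" where
  "leaves m = {l. length l = m}"

definition well_formed :: "nat \<Rightarrow> (bool list \<Rightarrow> bool \<Rightarrow> real) \<Rightarrow> bool" where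
  "well_formed m e \<longleftrightarrow>
     (\<forall>u. length u < m \<longrightarrow> (\<forall>b. 0 \<le> e u b) \<and> e u True + e u False = 1)"

definition visit :: "(bool list \<Rightarrow> bool \<Rightarrow> real) \<Rightarrow> bool list \<Rightarrow> real" where
  "visit e u = (\<Prod>i<length u. e (take i u) (u ! i))"

definition expect_leaf :: "nat \<Rightarrow> (bool list \<Rightarrow> bool \<Rightarrow> real) \<Rightarrow> (bool list \<Rightarrow> real) \<Rightarrow> real" where
  "expect_leaf m e f = (\<Sum>l\<in>leaves m. visit e l * f l)"

text \<open>The subprotocol Pi_c lives on the subtree rooted at [c]:
  its control, edge probabilities and output are those of Pi shifted by the prefix c.
  Leaves of Pi_c are identified with leaves of Pi starting with c (we pass tl l).\<close>
fun domM :: "nat \<Rightarrow> (bool list \<Rightarrow> bool) \<Rightarrow> (bool list \<Rightarrow> bool \<Rightarrow> real)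
               \<Rightarrow> (bool list \<Rightarrow> bool) \<Rightarrow> bool list \<Rightarrow> real" where
  "domM 0 ctrl e chi l = of_bool (chi l)"
| "domM (Suc m) ctrl e chi l =
     (let b = hd l;
          Mc = (\<lambda>c. domM m (\<lambda>u. ctrl (c # u)) (\<lambda>u. e (c # u)) (\<lambda>u. chi (c # u)));
          mu = (\<lambda>c. expect_leaf m (\<lambda>u. e (c # u)) (Mc c))
      in if e [] b = 0 then 0
         else if e [] b = 1 then Mc b (tl l)
         else if ctrl [] \<or> mu b \<le> mu (\<not> b) then Mc b (tl l)
         else mu (\<not> b) / mu b * Mc b (tl l))"

text \<open>Edge probabilities of (A, B') for a deterministic B-strategy s (s u = child chosen at u).\<close>
definition strat_edges :: "(bool list \<Rightarrow> bool) \<Rightarrow> (bool list \<Rightarrow> bool \<Rightarrow> real)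
                             \<Rightarrow> (bool list \<Rightarrow> bool) \<Rightarrow> bool list \<Rightarrow> bool \<Rightarrow> real" where
  "strat_edges ctrl e s u b = (if ctrl u then e u b else of_bool (s u = b))"

definition valid_strat :: "nat \<Rightarrow> (bool list \<Rightarrow> bool) \<Rightarrow> (bool list \<Rightarrow> bool \<Rightarrow> real)
                             \<Rightarrow> (bool list \<Rightarrow> bool) \<Rightarrow> bool" where
  "valid_strat m ctrl e s \<longleftrightarrow>
     (\<forall>u. length u \<le> m \<longrightarrow> visit e u = 0 \<longrightarrow> visit (strat_edges ctrl e s) u = 0)"

definition val :: "nat \<Rightarrow> (bool list \<Rightarrow> bool \<Rightarrow> real) \<Rightarrow> (bool list \<Rightarrow> bool) \<Rightarrow> real" where
  "val m e chi = expect_leaf m e (\<lambda>l. of_bool (chi l))"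

definition Best_B :: "nat \<Rightarrow> (bool list \<Rightarrow> bool) \<Rightarrow> (bool list \<Rightarrow> bool \<Rightarrow> real)
                        \<Rightarrow> (bool list \<Rightarrow> bool) \<Rightarrow> real" where
  "Best_B m ctrl e chi =
     Max {1 - val m (strat_edges ctrl e s) chi | s. valid_strat m ctrl e s}"

end

theory Submission
  imports Defs
begin

lemma visit_Nil[simp]: "visit e [] = 1" by (simp add: visit_def)

lemma visit_Cons: "visit e (c#u) = e [] c * visit (\<lambda>u. e (c#u)) u"
  unfolding visit_def length_Cons prod.lessThan_Suc_shift by simp

lemma finite_leaves: "finite (leaves m)"
proof -
  have "leaves m = {xs::bool list. set xs \<subseteq> UNIV \<and> length xs = m}" by (auto simp: leaves_def)
  then show ?thesis using finite_lists_length_eq[of "UNIV::bool set" m] by simp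
qed

lemma leaves_Suc: "leaves (Suc m) = (\<lambda>(c,l). c#l) ` (UNIV \<times> leaves m)"
  unfolding leaves_def
  by (auto simp: image_iff length_Suc_conv)

lemma expect_leaf_Suc: "expect_leaf (Suc m) e f =
   (\<Sum>c\<in>UNIV. e [] c * expect_leaf m (\<lambda>u. e (c#u)) (\<lambda>l. f (c#l)))"
proof -
  have inj: "inj_on (\<lambda>(c,l). c#l) (UNIV \<times> leaves m)" by (auto simp: inj_on_def)
  have "expect_leaf (Suc m) e f = (\<Sum>(c,l)\<in>UNIV \<times> leaves m. visit e (c#l) * f (c#l))"
    unfolding expect_leaf_def leaves_Suc by (subst sum.reindex[OF inj]) (simp add: case_prod_beta)
  also have "\<dots> = (\<Sum>c\<in>UNIV. \<Sum>l\<in>leaves m. visit e (c#l) * f (c#l))"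
    by (rule sum.cartesian_product[symmetric])
  also have "\<dots> = (\<Sum>c\<in>UNIV. e [] c * expect_leaf m (\<lambda>u. e (c#u)) (\<lambda>l. f (c#l)))"
    unfolding expect_leaf_def by (simp add: visit_Cons sum_distrib_left mult.assoc)
  finally show ?thesis .
qed

lemma sum_bool_split: "(\<Sum>c\<in>UNIV. g c) = g b + (g (\<not> b) :: real)"
  by (cases b) (simp_all add: UNIV_bool)

lemma expect_leaf_scale: "expect_leaf m e (\<lambda>l. k * f l) = k * expect_leaf m e f"
  unfolding expect_leaf_def by (simp add: sum_distrib_left mult.assoc mult.left_commute)

lemma strat_shift[simp]: "(\<lambda>u. strat_edges ctrl e s (c#u)) = strat_edges (\<lambda>u. ctrl (c#u)) (\<lambda>u. e (c#u)) (\<lambda>u. s (c#u))"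
  by (auto simp: strat_edges_def fun_eq_iff)

lemma val_Suc: "val (Suc m) (strat_edges ctrl e s) chi =
  (\<Sum>c\<in>UNIV. strat_edges ctrl e s [] c * val m (strat_edges (\<lambda>u. ctrl (c#u)) (\<lambda>u. e (c#u)) (\<lambda>u. s (c#u))) (\<lambda>u. chi (c#u)))"
  unfolding val_def by (subst expect_leaf_Suc) simp

lemma visit_nonneg: "well_formed m e \<Longrightarrow> length l \<le> m \<Longrightarrow> 0 \<le> visit e l"
  unfolding visit_def well_formed_def by (auto intro!: prod_nonneg)

lemma wf_strat: "well_formed m e \<Longrightarrow> well_formed m (strat_edges ctrl e s)"
  unfolding well_formed_def strat_edges_def by auto

lemma wf_shift: "well_formed (Suc m) e \<Longrightarrow> well_formed m (\<lambda>u. e (c#u))"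
  unfolding well_formed_def by auto

lemma val_nonneg: "well_formed m e \<Longrightarrow> 0 \<le> val m (strat_edges ctrl e s) chi"
  unfolding val_def expect_leaf_def
  by (intro sum_nonneg mult_nonneg_nonneg visit_nonneg wf_strat) (auto simp: leaves_def)

lemma valid_root: "valid_strat (Suc m) ctrl e s \<Longrightarrow> e [] c = 0 \<Longrightarrow> strat_edges ctrl e s [] c = 0"
  unfolding valid_strat_def
  apply (drule spec[of _ "[c]"])
  by (simp add: visit_Cons)

lemma valid_sub: "valid_strat (Suc m) ctrl e s \<Longrightarrow> e [] c \<noteq> 0 \<Longrightarrow> strat_edges ctrl e s [] c \<noteq> 0
   \<Longrightarrow> valid_strat m (\<lambda>u. ctrl (c#u)) (\<lambda>u. e (c#u)) (\<lambda>u. s (c#u))"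
  unfolding valid_strat_def
proof (intro allI impI)
  fix u :: "bool list"
  assume A: "\<forall>u. length u \<le> Suc m \<longrightarrow> visit e u = 0 \<longrightarrow> visit (strat_edges ctrl e s) u = 0"
    and h: "e [] c \<noteq> 0" "strat_edges ctrl e s [] c \<noteq> 0" "length u \<le> m" "visit (\<lambda>u. e (c # u)) u = 0"
  have "visit (strat_edges ctrl e s) (c#u) = 0" using A[rule_format, of "c#u"] h by (simp add: visit_Cons)
  then show "visit (strat_edges (\<lambda>u. ctrl (c # u)) (\<lambda>u. e (c # u)) (\<lambda>u. s (c # u))) u = 0"
    using h by (simp add: visit_Cons)
qed

lemma valid_intro:
  assumes "\<And>c. e [] c = 0 \<Longrightarrow> strat_edges ctrl e s [] c = 0"
    and "\<And>c. e [] c \<noteq> 0 \<Longrightarrow> valid_strat m (\<lambda>u. ctrl (c#u)) (\<lambda>u. e (c#u)) (\<lambda>u. s (c#u))"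
  shows "valid_strat (Suc m) ctrl e s"
  unfolding valid_strat_def
proof (intro allI impI)
  fix u :: "bool list"
  assume h: "length u \<le> Suc m" "visit e u = 0"
  show "visit (strat_edges ctrl e s) u = 0"
  proof (cases u)
    case Nil then show ?thesis using h by simp
  next
    case (Cons c u')
    show ?thesis
    proof (cases "e [] c = 0")
      case True then show ?thesis using assms(1)[OF True] Cons by (simp add: visit_Cons)
    next
      case False
      then have "visit (\<lambda>u. e (c#u)) u' = 0" using h Cons by (simp add: visit_Cons)
      then show ?thesis using assms(2)[OF False] h Cons unfolding valid_strat_def by (simp add: visit_Cons)
    qed
  qed
qed

lemma domM_Cons: "domM (Suc m) ctrl e chi (c#l) =
  (let mu = (\<lambda>c. expect_leaf m (\<lambda>u. e (c # u)) (domM m (\<lambda>u. ctrl (c # u)) (\<lambda>u. e (c # u)) (\<lambda>u. chi (c # u))))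
   in (if e [] c = 0 then 0 else if e [] c = 1 then 1 else if ctrl [] \<or> mu c \<le> mu (\<not> c) then 1 else mu (\<not> c) / mu c))
   * domM m (\<lambda>u. ctrl (c # u)) (\<lambda>u. e (c # u)) (\<lambda>u. chi (c # u)) l"
  by (simp add: Let_def)

lemma main:
  "well_formed m e \<Longrightarrow>
   (\<forall>s. valid_strat m ctrl e s \<longrightarrow> expect_leaf m e (domM m ctrl e chi) \<le> val m (strat_edges ctrl e s) chi) \<and>
   (\<exists>s. valid_strat m ctrl e s \<and> val m (strat_edges ctrl e s) chi = expect_leaf m e (domM m ctrl e chi))"
proof (induction m arbitrary: ctrl e chi)
  case 0
  have E: "expect_leaf 0 e f = f []" for e f
    unfolding expect_leaf_def leaves_def by simp
  show ?case by (simp add: E val_def valid_strat_def)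
next
  case (Suc m)
  define ec where "ec c = (\<lambda>u. e (c#u))" for c
  define cc where "cc c = (\<lambda>u. ctrl (c#u))" for c
  define xc where "xc c = (\<lambda>u. chi (c#u))" for c
  define mu where "mu c = expect_leaf m (ec c) (domM m (cc c) (ec c) (xc c))" for c
  define vc where "vc c s = val m (strat_edges (cc c) (ec c) (\<lambda>u. s (c#u))) (xc c)" for c s
  define fac where "fac c = (if e [] c = 0 then 0 else if e [] c = 1 then 1 else if ctrl [] \<or> mu c \<le> mu (\<not> c) then 1 else mu (\<not> c) / mu c)" for c
  have wf: "\<And>c. 0 \<le> e [] c" "e [] True + e [] False = 1"
    using Suc.prems unfolding well_formed_def by auto
  have wfc: "well_formed m (ec c)" for c using wf_shift[OF Suc.prems] unfolding ec_def .
  note IH = Suc.IH[where ctrl="cc c" and e="ec c" and chi="xc c" for c, OF wfc, folded mu_def]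
  have "\<forall>c. \<exists>s. valid_strat m (cc c) (ec c) s \<and> val m (strat_edges (cc c) (ec c) s) (xc c) = mu c"
    using IH by blast
  then obtain S where S: "\<And>c. valid_strat m (cc c) (ec c) (S c)"
    "\<And>c. val m (strat_edges (cc c) (ec c) (S c)) (xc c) = mu c" by metis
  have mu_nn: "0 \<le> mu c" for c using S(2)[of c] val_nonneg[OF wfc] by metis
  have E: "expect_leaf (Suc m) e (domM (Suc m) ctrl e chi) = (\<Sum>c\<in>UNIV. e [] c * (fac c * mu c))"
    unfolding expect_leaf_Suc domM_Cons Let_def expect_leaf_scale fac_def mu_def ec_def cc_def xc_def
    by simp
  have V: "val (Suc m) (strat_edges ctrl e s) chi = (\<Sum>c\<in>UNIV. strat_edges ctrl e s [] c * vc c s)" for s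
    unfolding val_Suc vc_def cc_def ec_def xc_def ..
  have other: "e [] (\<not> b) = 1 - e [] b" for b using wf by (cases b) auto
  have hb: "x * e [] b + x * e [] (\<not> b) = x" for x b
  proof -
    have "x * e [] b + x * e [] (\<not> b) = x * (e [] b + e [] (\<not> b))" by (simp add: distrib_left)
    also have "\<dots> = x" using other[of b] by simp
    finally show ?thesis .
  qed
  have hb2: "e [] b * x + x * e [] (\<not> b) = x" "e [] b * x + e [] (\<not> b) * x = x" "x * e [] b + e [] (\<not> b) * x = x" for x b
    using hb[of x b] by (simp_all add: mult.commute)
  show ?case
  proof (intro conjI allI impI)
    fix s assume vs: "valid_strat (Suc m) ctrl e s"
    show "expect_leaf (Suc m) e (domM (Suc m) ctrl e chi) \<le> val (Suc m) (strat_edges ctrl e s) chi"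
    proof (cases "ctrl []")
      case True
      have "e [] c * (fac c * mu c) \<le> strat_edges ctrl e s [] c * vc c s" for c
      proof (cases "e [] c = 0")
        case False
        then have "valid_strat m (cc c) (ec c) (\<lambda>u. s (c#u))"
          using valid_sub[OF vs False] True by (simp add: strat_edges_def cc_def ec_def)
        then have "mu c \<le> vc c s" using IH unfolding vc_def by blast
        then show ?thesis using True False wf(1)[of c] by (simp add: fac_def strat_edges_def mult_left_mono)
      qed (simp add: True strat_edges_def)
      then show ?thesis unfolding E V by (rule sum_mono)
    next
      case False
      define b where "b = s []"
      have se: "strat_edges ctrl e s [] c = of_bool (b = c)" for c using False by (simp add: strat_edges_def b_def)
      have eb: "e [] b \<noteq> 0" using valid_root[OF vs, of b] se by auto
      have "valid_strat m (cc b) (ec b) (\<lambda>u. s (b#u))"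
        using valid_sub[OF vs eb] se by (simp add: cc_def ec_def)
      then have mub: "mu b \<le> vc b s" using IH unfolding vc_def by blast
      have Vb: "val (Suc m) (strat_edges ctrl e s) chi = vc b s"
        unfolding V sum_bool_split[of _ b] se by simp
      have "(\<Sum>c\<in>UNIV. e [] c * (fac c * mu c)) \<le> mu b"
      proof (cases "e [] b = 1")
        case True
        then show ?thesis unfolding sum_bool_split[of _ b] using other[of b] by (simp add: fac_def)
      next
        case nb1: False
        have p: "0 < e [] b" "0 < e [] (\<not> b)" using eb nb1 wf(1)[of b] wf(1)[of "\<not> b"] other[of b] by auto
        show ?thesis
        proof (cases "mu b \<le> mu (\<not> b)")
          case True
          then show ?thesis unfolding sum_bool_split[of _ b] using other[of b] p nb1 False mu_nn[of b] mu_nn[of "\<not> b"]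
            by (auto simp: fac_def algebra_simps hb hb2)
        next
          case F2: False
          then have "mu b > 0" using mu_nn[of "\<not> b"] by linarith
          then show ?thesis unfolding sum_bool_split[of _ b] using other[of b] p nb1 False mu_nn[of b] mu_nn[of "\<not> b"] F2
            by (auto simp: fac_def algebra_simps hb hb2)
        qed
      qed
      then show ?thesis unfolding E Vb using mub by linarith
    qed
  next
    show "\<exists>s. valid_strat (Suc m) ctrl e s \<and> val (Suc m) (strat_edges ctrl e s) chi = expect_leaf (Suc m) e (domM (Suc m) ctrl e chi)"
    proof -
      define b where "b = (if e [] True = 0 then False else if e [] False = 0 then True else mu True \<le> mu False)"
      define s where "s = (\<lambda>u. case u of [] \<Rightarrow> b | c#u' \<Rightarrow> S c u')"
      have sc: "(\<lambda>u. s (c#u)) = S c" for c by (simp add: s_def)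
      have s0: "s [] = b" by (simp add: s_def)
      have eb: "e [] b \<noteq> 0" using wf unfolding b_def by (cases "mu True \<le> mu False") auto
      have vs: "valid_strat (Suc m) ctrl e s"
      proof (rule valid_intro)
        fix c assume "e [] c = 0"
        then show "strat_edges ctrl e s [] c = 0" using eb s0
          by (cases "b = c") (auto simp: strat_edges_def)
      next
        fix c show "valid_strat m (\<lambda>u. ctrl (c#u)) (\<lambda>u. e (c#u)) (\<lambda>u. s (c#u))"
          using S(1)[of c] sc unfolding cc_def ec_def by simp
      qed
      have vcs: "vc c s = mu c" for c using S(2)[of c] unfolding vc_def sc .
      have "val (Suc m) (strat_edges ctrl e s) chi = (\<Sum>c\<in>UNIV. e [] c * (fac c * mu c))"
      proof (cases "ctrl []")
        case True
        have "strat_edges ctrl e s [] c * vc c s = e [] c * (fac c * mu c)" for c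
          using True vcs[of c] by (simp add: strat_edges_def fac_def)
        then show ?thesis unfolding V by simp
      next
        case False
        have se: "strat_edges ctrl e s [] c = of_bool (b = c)" for c using False s0 by (simp add: strat_edges_def)
        have Vb: "val (Suc m) (strat_edges ctrl e s) chi = mu b"
          unfolding V sum_bool_split[of _ b] se vcs by simp
        have "(\<Sum>c\<in>UNIV. e [] c * (fac c * mu c)) = mu b"
        proof (cases "e [] b = 1")
          case True
          then show ?thesis unfolding sum_bool_split[of _ b] using other[of b] by (simp add: fac_def)
        next
          case nb1: False
          have p: "0 < e [] b" "0 < e [] (\<not> b)" using eb nb1 wf(1)[of b] wf(1)[of "\<not> b"] other[of b] by auto
          have le: "mu b \<le> mu (\<not> b)" using p unfolding b_def by (cases "mu True \<le> mu False") (auto split: if_splits)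
          show ?thesis
          proof (cases "mu b = mu (\<not> b)")
            case True
            then show ?thesis unfolding sum_bool_split[of _ b] using other[of b] p nb1 False mu_nn[of b] mu_nn[of "\<not> b"]
              by (auto simp: fac_def algebra_simps hb hb2)
          next
            case F2: False
            then have "mu (\<not> b) > 0" using mu_nn[of b] le by linarith
            then show ?thesis unfolding sum_bool_split[of _ b] using other[of b] p nb1 False mu_nn[of b] mu_nn[of "\<not> b"] F2 le
              by (auto simp: fac_def algebra_simps hb hb2)
          qed
        qed
        then show ?thesis using Vb by simp
      qed
      then show ?thesis using vs E by auto
    qed
  qed
qed

lemma val_trunc: "val m (strat_edges ctrl e s) chi = val m (strat_edges ctrl e (\<lambda>u. s u \<and> length u < m)) chi"
  unfolding val_def expect_leaf_def
proof (rule sum.cong[OF refl])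
  fix l assume "l \<in> leaves m"
  then have l: "length l = m" by (simp add: leaves_def)
  have "visit (strat_edges ctrl e s) l = visit (strat_edges ctrl e (\<lambda>u. s u \<and> length u < m)) l"
    unfolding visit_def using l by (intro prod.cong) (auto simp: strat_edges_def)
  then show "visit (strat_edges ctrl e s) l * of_bool (chi l) =
        visit (strat_edges ctrl e (\<lambda>u. s u \<and> length u < m)) l * of_bool (chi l)" by simp
qed

lemma finite_vals: "finite {1 - val m (strat_edges ctrl e s) chi | s. valid_strat m ctrl e s}"
proof -
  define T where "T = {s :: bool list \<Rightarrow> bool. \<forall>u. s u \<longrightarrow> length u < m}"
  have fu: "finite {u::bool list. length u < m}"
    by (rule finite_subset[OF _ finite_lists_length_le[of "UNIV::bool set" m]]) auto
  have "T \<subseteq> (\<lambda>A u. u \<in> A) ` Pow {u::bool list. length u < m}"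
  proof
    fix s assume "s \<in> T"
    then have "{u. s u} \<in> Pow {u::bool list. length u < m}" by (auto simp: T_def)
    moreover have "s = (\<lambda>u. u \<in> {u. s u})" by simp
    ultimately show "s \<in> (\<lambda>A u. u \<in> A) ` Pow {u::bool list. length u < m}"
      by blast
  qed
  then have fT: "finite T" using fu by (meson finite_Pow_iff finite_imageI finite_subset)
  have "{1 - val m (strat_edges ctrl e s) chi | s. valid_strat m ctrl e s}
        \<subseteq> (\<lambda>s. 1 - val m (strat_edges ctrl e s) chi) ` T"
  proof
    fix x assume "x \<in> {1 - val m (strat_edges ctrl e s) chi | s. valid_strat m ctrl e s}"
    then obtain s where "x = 1 - val m (strat_edges ctrl e s) chi" by blast
    then have "x = 1 - val m (strat_edges ctrl e (\<lambda>u. s u \<and> length u < m)) chi"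
      by (simp add: val_trunc[of m ctrl e s chi])
    moreover have "(\<lambda>u. s u \<and> length u < m) \<in> T" by (simp add: T_def)
    ultimately show "x \<in> (\<lambda>s. 1 - val m (strat_edges ctrl e s) chi) ` T" by blast
  qed
  then show ?thesis using fT finite_subset by blast
qed

theorem lemma3p12:
  fixes m :: nat and ctrl :: "bool list \<Rightarrow> bool"
    and e :: "bool list \<Rightarrow> bool \<Rightarrow> real" and chi :: "bool list \<Rightarrow> bool"
  assumes "well_formed m e"
  shows "Best_B m ctrl e chi = 1 - expect_leaf m e (domM m ctrl e chi)"
proof -
  note M = main[OF assms, of ctrl chi]
  show ?thesis unfolding Best_B_def
  proof (rule Max_eqI[OF finite_vals])
    fix y assume "y \<in> {1 - val m (strat_edges ctrl e s) chi | s. valid_strat m ctrl e s}"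
    then show "y \<le> 1 - expect_leaf m e (domM m ctrl e chi)" using M by force
  next
    obtain s where "valid_strat m ctrl e s" "val m (strat_edges ctrl e s) chi = expect_leaf m e (domM m ctrl e chi)"
      using M by blast
    then show "1 - expect_leaf m e (domM m ctrl e chi) \<in> {1 - val m (strat_edges ctrl e s) chi | s. valid_strat m ctrl e s}"
      by force
  qed
qed

end
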